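(* Consider the erase-repetition game over a symbol set $S$ with $|S|\geq 8$. Then for every $n\geq 1$ Ann has a strategy guaranteeing that, whatever Ben plays, at some moment of the game the current sequence has length $n$ (the current sequence being nonrepetitive at every moment). In this sense Ann can build an arbitrarily long nonrepetitive sequence.
   Context: A repetition of size $h\geq1$ in a sequence is a block of consecutive terms of the form $x_1\ldots x_h x_1\ldots x_h$; a sequence is nonrepetitive if it contains no repetition of any size. The erase-repetition game over a symbol set $S$ is played by two players, Ann and Ben, who alternately (Ann first) choose a symbol from $S$ and append it to the end of the current sequence (initially empty). Whenever, after appending a symbol, the sequence contains a repetition (necessarily a suffix $x_1\ldots x_hx_1\ldots x_h$, and unique), the second copy $x_1\ldots x_h$ of the repeated block is immediately erased, and the next player continues by extending the remaining sequence. Thus after each move (and erasure) the current sequence is nonrepetitive. *)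

theory Defs
  imports Main
begin

definition nonrepetitive :: "'a list \<Rightarrow> bool" where
  "nonrepetitive w \<longleftrightarrow> \<not> (\<exists>u x z. x \<noteq> [] \<and> w = u @ x @ x @ z)"

definition rep_suffix :: "'a list \<Rightarrow> nat \<Rightarrow> bool" where
  "rep_suffix v h \<longleftrightarrow> (\<exists>u x. length x = h \<and> h \<ge> 1 \<and> v = u @ x @ x)"

(* One move of the erase-repetition game: append symbol a to the current sequence w;
   if a repetition (necessarily a suffix x x) arises, erase its second copy.
   (If w is nonrepetitive the suffix repetition is unique; LEAST is only used to pick it.) *)
definition game_move :: "'a list \<Rightarrow> 'a \<Rightarrow> 'a list" where
  "game_move w a =
     (let v = w @ [a] in
      if \<exists>h. rep_suffix v h then take (length v - (LEAST h. rep_suffix v h)) v else v)"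

fun history :: "('a list \<Rightarrow> 'a) \<Rightarrow> (nat \<Rightarrow> 'a) \<Rightarrow> nat \<Rightarrow> 'a list" where
  "history ann ben 0 = []"
| "history ann ben (Suc k) =
     history ann ben k @ [if even k then ann (history ann ben k) else ben (k div 2)]"

definition current_seq :: "('a list \<Rightarrow> 'a) \<Rightarrow> (nat \<Rightarrow> 'a) \<Rightarrow> nat \<Rightarrow> 'a list" where
  "current_seq ann ben k = foldl game_move [] (history ann ben k)"

end

theory Submission
  imports Defs Complex_Main
begin


definition gh :: "'a list \<Rightarrow> 'a \<Rightarrow> nat" where
  "gh w a = (if \<exists>h. rep_suffix (w@[a]) h then LEAST h. rep_suffix (w@[a]) h else 0)"

lemma gm_eq: "game_move w a = take (length w + 1 - gh w a) (w@[a])"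
  unfolding game_move_def gh_def Let_def by auto

lemma gh_rep: "gh w a \<noteq> 0 \<Longrightarrow> rep_suffix (w@[a]) (gh w a)"
  unfolding gh_def by (auto split: if_splits intro: LeastI_ex)

lemma gm_len: "length (game_move w a) = length w + 1 - gh w a"
  unfolding gm_eq by simp

lemma rep_per:
  assumes "rep_suffix v h" "length v - h \<le> p" "p < length v"
  shows "h \<le> p \<and> 2*h \<le> length v \<and> v!p = v!(p-h)"
proof -
  obtain u x where ux: "length x = h" "h \<ge> 1" "v = u @ x @ x"
    using assms(1) unfolding rep_suffix_def by blast
  have lv: "length v = length u + 2*h" using ux by simp
  have p1: "p \<ge> length u + h" using assms(2) lv by simp
  have v2: "v = (u @ x) @ x" using ux by simp
  have "v!p = x!(p - (length u + h))"
    unfolding v2 using ux p1 by (simp add: nth_append)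
  moreover have "v!(p-h) = x!(p - h - length u)"
  proof -
    have "p - h \<ge> length u" using p1 by simp
    moreover have "p - h < length u + h" using assms(3) lv by simp
    ultimately show ?thesis using ux by (simp add: nth_append)
  qed
  moreover have "p - (length u + h) = p - h - length u" by simp
  ultimately show ?thesis using p1 lv by simp
qed

definition cur :: "'a list \<Rightarrow> 'a list" where "cur h = foldl game_move [] h"

lemma cur_snoc: "cur (h@[a]) = game_move (cur h) a"
  unfolding cur_def by simp

lemma cur_Nil[simp]: "cur [] = []" unfolding cur_def by simp

lemma set_gm: "set (game_move w a) \<subseteq> set w \<union> {a}"
  unfolding gm_eq by (metis Un_insert_right set_append set_take_subset empty_set list.simps(15) sup_bot.right_neutral)

lemma set_cur: "set (cur h) \<subseteq> set h"
proof (induction h rule: rev_induct)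
  case Nil then show ?case by simp
next
  case (snoc x xs) then show ?case using set_gm[of "cur xs" x] by (auto simp: cur_snoc)
qed

definition len :: "'a list \<Rightarrow> nat \<Rightarrow> nat" where "len s t = length (cur (take t s))"

lemma cur_take_Suc: "t < length s \<Longrightarrow> cur (take (Suc t) s) = game_move (cur (take t s)) (s!t)"
  by (simp add: take_Suc_conv_app_nth cur_snoc)

lemma len_Suc: "t < length s \<Longrightarrow> len s (Suc t) = len s t + 1 - gh (cur (take t s)) (s!t)"
  unfolding len_def by (simp add: cur_take_Suc gm_len)

lemma len_Suc_le: "t < length s \<Longrightarrow> len s (Suc t) \<le> len s t + 1"
proof -
  assume "t < length s"
  then have "len s (Suc t) = len s t + 1 - gh (cur (take t s)) (s!t)" by (rule len_Suc)
  then show ?thesis by simp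
qed

lemma len_0[simp]: "len s 0 = 0" unfolding len_def by simp

lemma pref:
  assumes "i \<le> t" "t \<le> length s" "p \<le> len s i" "\<forall>t'. i < t' \<and> t' \<le> t \<longrightarrow> p \<le> len s t'"
  shows "take p (cur (take t s)) = take p (cur (take i s))"
  using assms
proof (induction t rule: dec_induct)
  case base then show ?case by simp
next
  case (step m)
  have m: "m < length s" using step by simp
  have pm: "p \<le> len s m" using step by (cases "m = i") auto
  have pS: "p \<le> len s (Suc m)" using step by auto
  have "take p (cur (take (Suc m) s)) = take p (take (length (cur (take m s)) + 1 - gh (cur (take m s)) (s!m)) (cur (take m s) @ [s!m]))"
    using m by (simp add: cur_take_Suc gm_eq)
  also have "\<dots> = take p (cur (take m s) @ [s!m])"
    using pS len_Suc[OF m] unfolding len_def by (simp add: min_def)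
  also have "\<dots> = take p (cur (take m s))" using pm unfolding len_def by simp
  finally show ?case using step by simp
qed

definition alive :: "'a list \<Rightarrow> nat \<Rightarrow> nat \<Rightarrow> bool" where
  "alive s i t = (\<forall>t'. i < t' \<and> t' \<le> t \<longrightarrow> len s i < len s t')"

lemma sym_alive:
  assumes "i < t" "t \<le> length s" "alive s i t"
  shows "take (Suc (len s i)) (cur (take t s)) = cur (take i s) @ [s!i]"
proof -
  have i: "i < length s" using assms by simp
  have l1: "len s i < len s (Suc i)" using assms unfolding alive_def by auto
  then have g0: "gh (cur (take i s)) (s!i) = 0" using len_Suc[OF i] by simp
  have c1: "cur (take (Suc i) s) = cur (take i s) @ [s!i]"
    using cur_take_Suc[OF i] g0 by (simp add: gm_eq)
  have "take (Suc (len s i)) (cur (take t s)) = take (Suc (len s i)) (cur (take (Suc i) s))"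
  proof (rule pref)
    show "\<forall>t'. Suc i < t' \<and> t' \<le> t \<longrightarrow> Suc (len s i) \<le> len s t'"
    proof (intro allI impI)
      fix t' assume "Suc i < t' \<and> t' \<le> t"
      then have "i < t' \<and> t' \<le> t" by simp
      then show "Suc (len s i) \<le> len s t'" using assms(3) unfolding alive_def by auto
    qed
  qed (use assms l1 in auto)
  also have "\<dots> = cur (take i s) @ [s!i]" using c1 unfolding len_def by simp
  finally show ?thesis .
qed

lemma sym_alive_nth:
  assumes "i < t" "t \<le> length s" "alive s i t"
  shows "cur (take t s) ! len s i = s!i" "take (len s i) (cur (take t s)) = cur (take i s)"
proof -
  have e: "take (Suc (len s i)) (cur (take t s)) = cur (take i s) @ [s!i]" using sym_alive[OF assms] .
  have "len s i < length (cur (take t s))"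
    using arg_cong[OF e, of length] unfolding len_def by (auto simp: min_def split: if_splits)
  then show "cur (take t s) ! len s i = s!i"
    by (metis e lessI nth_append_length nth_take len_def)
  have "take (len s i) (cur (take t s)) = take (len s i) (take (Suc (len s i)) (cur (take t s)))"
    by simp
  also have "\<dots> = take (len s i) (cur (take i s) @ [s!i])" using e by simp
  also have "\<dots> = cur (take i s)" unfolding len_def by simp
  finally show "take (len s i) (cur (take t s)) = cur (take i s)" .
qed

definition killed :: "'a list \<Rightarrow> nat \<Rightarrow> bool" where
  "killed s i = (\<exists>t'. i < t' \<and> t' \<le> length s \<and> len s t' \<le> len s i)"

definition kt :: "'a list \<Rightarrow> nat \<Rightarrow> nat" where
  "kt s i = (LEAST t'. i < t' \<and> t' \<le> length s \<and> len s t' \<le> len s i)"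

definition dd :: "'a list \<Rightarrow> nat \<Rightarrow> nat" where
  "dd s t = len s (t - 1) + 1 - len s t"

definition ksize :: "'a list \<Rightarrow> nat \<Rightarrow> nat" where
  "ksize s i = dd s (kt s i)"

lemma kt_props:
  assumes "killed s i"
  shows "i < kt s i" "kt s i \<le> length s" "len s (kt s i) \<le> len s i"
        "\<And>t'. i < t' \<Longrightarrow> t' < kt s i \<Longrightarrow> len s i < len s t'"
proof -
  let ?P = "\<lambda>t'. i < t' \<and> t' \<le> length s \<and> len s t' \<le> len s i"
  have "?P (kt s i)" using assms unfolding killed_def kt_def by (rule LeastI_ex)
  then show "i < kt s i" "kt s i \<le> length s" "len s (kt s i) \<le> len s i" by auto
  fix t' assume a: "i < t'" "t' < kt s i"
  have "\<not> ?P t'" using a(2) unfolding kt_def by (rule not_less_Least)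
  then show "len s i < len s t'" using a \<open>kt s i \<le> length s\<close> by auto
qed

lemma survivor:
  assumes "i < length s" "\<not> killed s i"
  shows "cur s ! len s i = s!i"
proof -
  have "alive s i (length s)" using assms(2) unfolding killed_def alive_def by auto
  then have "cur (take (length s) s) ! len s i = s!i" using sym_alive_nth(1)[of i "length s" s] assms(1) by simp
  then show ?thesis by simp
qed

lemma kill_val:
  assumes "i < length s" "killed s i"
  shows "1 \<le> ksize s i" "ksize s i \<le> len s i" "s!i = cur (take i s) ! (len s i - ksize s i)"
proof -
  define \<tau> where "\<tau> = kt s i"
  note kp = kt_props[OF assms(2), folded \<tau>_def]
  define m where "m = \<tau> - 1"
  have m: "i \<le> m" "m < length s" "Suc m = \<tau>" using kp unfolding m_def by auto
  define v where "v = cur (take m s) @ [s!m]"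
  define g where "g = gh (cur (take m s)) (s!m)"
  have lv: "length v = len s m + 1" unfolding v_def len_def by simp
  have ltau: "len s \<tau> = len s m + 1 - g" using len_Suc[OF m(2)] m(3) unfolding g_def by simp
  have vi: "v ! len s i = s!i \<and> take (len s i) v = cur (take i s) \<and> len s i \<le> len s m"
  proof (cases "m = i")
    case True then show ?thesis unfolding v_def len_def by simp
  next
    case False
    then have im: "i < m" using m by simp
    have al: "alive s i m" unfolding alive_def using kp(4) m by auto
    have lim: "len s i < len s m" using al im unfolding alive_def by auto
    have "cur (take m s) ! len s i = s!i" "take (len s i) (cur (take m s)) = cur (take i s)"
      using sym_alive_nth[OF im _ al] m by auto
    then show ?thesis using lim unfolding v_def len_def by (simp add: nth_append)
  qed
  have g0: "g \<noteq> 0" using ltau kp(3) vi by auto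
  have rep: "rep_suffix v g" using gh_rep[of "cur (take m s)" "s!m"] g0 unfolding v_def g_def by simp
  have pr: "g \<le> len s i \<and> 2*g \<le> length v \<and> v ! len s i = v ! (len s i - g)"
    using rep_per[OF rep, of "len s i"] lv ltau kp(3) vi by simp
  have ks: "ksize s i = g" unfolding ksize_def dd_def \<tau>_def[symmetric] m_def[symmetric]
    using ltau pr lv by simp
  show "1 \<le> ksize s i" using ks g0 by simp
  show "ksize s i \<le> len s i" using ks pr by simp
  have "s!i = v ! (len s i - g)" using pr vi by simp
  also have "\<dots> = take (len s i) v ! (len s i - g)" using g0 pr by simp
  also have "\<dots> = cur (take i s) ! (len s i - ksize s i)" using vi ks by simp
  finally show "s!i = cur (take i s) ! (len s i - ksize s i)" .
qed

datatype fate = Surv | Cont | Kill nat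

definition haspred :: "'a list \<Rightarrow> nat \<Rightarrow> bool" where
  "haspred s r = (\<exists>r'<r. alive s (2*r') (2*r))"

definition pred :: "'a list \<Rightarrow> nat \<Rightarrow> nat" where
  "pred s r = (GREATEST r'. r' < r \<and> alive s (2*r') (2*r))"

lemma pred_props:
  assumes "haspred s r"
  shows "pred s r < r" "alive s (2*pred s r) (2*r)"
        "\<And>r'. r' < r \<Longrightarrow> alive s (2*r') (2*r) \<Longrightarrow> r' \<le> pred s r"
proof -
  let ?P = "\<lambda>r'. r' < r \<and> alive s (2*r') (2*r)"
  obtain k where k: "?P k" using assms unfolding haspred_def by auto
  have "?P (pred s r)" unfolding pred_def
    by (rule GreatestI_nat[of _ k r]) (use k in auto)
  then show "pred s r < r" "alive s (2*pred s r) (2*r)" by auto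
  fix r' assume "r' < r" "alive s (2*r') (2*r)"
  then show "r' \<le> pred s r" unfolding pred_def
    by (intro Greatest_le_nat[of _ r' r]) auto
qed

definition fate :: "'a list \<Rightarrow> nat \<Rightarrow> fate" where
  "fate s r = (if \<not> killed s (2*r) then Surv
     else if haspred s r \<and> killed s (2*pred s r) \<and> ksize s (2*pred s r) = ksize s (2*r) then Cont
     else Kill (ksize s (2*r)))"

lemma fate_Surv: "fate s r = Surv \<longleftrightarrow> \<not> killed s (2*r)"
  unfolding fate_def by auto

lemma fate_Kill: "fate s r = Kill h \<Longrightarrow> killed s (2*r) \<and> h = ksize s (2*r) \<and>
   \<not> (haspred s r \<and> killed s (2*pred s r) \<and> ksize s (2*pred s r) = ksize s (2*r))"
  unfolding fate_def by (auto split: if_splits)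

lemma fate_Cont: "fate s r = Cont \<Longrightarrow> killed s (2*r) \<and>
   haspred s r \<and> killed s (2*pred s r) \<and> ksize s (2*pred s r) = ksize s (2*r)"
  unfolding fate_def by (auto split: if_splits)

lemma decode_Surv: "2*r < length s \<Longrightarrow> fate s r = Surv \<Longrightarrow> s!(2*r) = cur s ! len s (2*r)"
  using survivor fate_Surv by metis

lemma decode_Kill: "2*r < length s \<Longrightarrow> fate s r = Kill h \<Longrightarrow>
   s!(2*r) = cur (take (2*r) s) ! (len s (2*r) - h)"
  using kill_val(3) fate_Kill by metis

lemma decode_Cont: "2*r < length s \<Longrightarrow> fate s r = Cont \<Longrightarrow>
   s!(2*r) = cur (take (2*r) s) ! (len s (2*r) - ksize s (2*pred s r))"
  using kill_val(3) fate_Cont by metis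

lemma len_dep: "take T s = take T s' \<Longrightarrow> t \<le> T \<Longrightarrow> len s t = len s' t"
  unfolding len_def by (metis min.absorb1 take_take)

lemma alive_dep: "take T s = take T s' \<Longrightarrow> t \<le> T \<Longrightarrow> alive s i t = alive s' i t"
proof -
  assume a: "take T s = take T s'" "t \<le> T"
  show ?thesis
  proof (cases "i \<le> t")
    case True
    then show ?thesis unfolding alive_def using len_dep[OF a(1)] a(2)
      by (metis (no_types, opaque_lifting) order.trans)
  next
    case False then show ?thesis unfolding alive_def by auto
  qed
qed

lemma pred_dep:
  assumes "take (2*r) s = take (2*r) s'"
  shows "haspred s r = haspred s' r" "pred s r = pred s' r"
proof -
  have e: "\<And>r'. alive s (2*r') (2*r) = alive s' (2*r') (2*r)"
    using alive_dep[OF assms] by simp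
  show "haspred s r = haspred s' r" unfolding haspred_def e ..
  show "pred s r = pred s' r" unfolding pred_def e ..
qed

lemma ks_eq:
  assumes "map (fate s) [0..<M] = map (fate s') [0..<M]"
  shows "take (2*r) s = take (2*r) s' \<Longrightarrow> r < M \<Longrightarrow> killed s (2*r) \<Longrightarrow> ksize s (2*r) = ksize s' (2*r)"
proof (induction r rule: less_induct)
  case (less r)
  have fr: "fate s r = fate s' r" using assms less.prems(2)
    by (metis map_eq_conv atLeastLessThan_iff set_upt zero_le)
  show ?case
  proof (cases "fate s r")
    case Surv then show ?thesis using fate_Surv less.prems(3) by auto
  next
    case Cont
    then have c: "killed s (2*r) \<and> haspred s r \<and> killed s (2*pred s r) \<and> ksize s (2*pred s r) = ksize s (2*r)"
      by (rule fate_Cont)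
    have c': "killed s' (2*r) \<and> haspred s' r \<and> killed s' (2*pred s' r) \<and> ksize s' (2*pred s' r) = ksize s' (2*r)"
      using Cont fr fate_Cont by metis
    have pe: "pred s r = pred s' r" using pred_dep(2)[OF less.prems(1)] .
    have pl: "pred s r < r" using pred_props(1) c by blast
    have tk: "take (2*pred s r) s = take (2*pred s r) s'"
    proof -
      have "take (2*pred s r) s = take (2*pred s r) (take (2*r) s)" using pl by simp
      also have "\<dots> = take (2*pred s r) (take (2*r) s')" using less.prems(1) by simp
      also have "\<dots> = take (2*pred s r) s'" using pl by simp
      finally show ?thesis .
    qed
    have "ksize s (2*pred s r) = ksize s' (2*pred s r)"
      using less.IH[OF pl tk] pl less.prems(2) c by simp
    then show ?thesis using c c' pe by simp
  next
    case (Kill h)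
    then have "h = ksize s (2*r)" using fate_Kill by blast
    moreover have "h = ksize s' (2*r)" using fate_Kill Kill fr by metis
    ultimately show ?thesis by simp
  qed
qed

fun play :: "('a list \<Rightarrow> 'a) \<Rightarrow> 'a list \<Rightarrow> nat \<Rightarrow> 'a list" where
  "play b c 0 = []"
| "play b c (Suc k) = play b c k @ [if even k then c ! (k div 2) else b (play b c k)]"

lemma length_play[simp]: "length (play b c k) = k"
  by (induction k) auto

lemma play_take: "k \<le> K \<Longrightarrow> take k (play b c K) = play b c k"
proof (induction K)
  case 0 then show ?case by simp
next
  case (Suc K)
  show ?case
  proof (cases "k = Suc K")
    case True then show ?thesis by simp
  next
    case False then have "k \<le> K" using Suc by simp
    then show ?thesis using Suc by simp
  qed
qed

lemma play_nth: "k < K \<Longrightarrow> play b c K ! k = (if even k then c!(k div 2) else b (play b c k))"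
proof -
  assume a: "k < K"
  have "play b c K ! k = take (Suc k) (play b c K) ! k" using a by simp
  also have "\<dots> = play b c (Suc k) ! k" using play_take[of "Suc k" K b c] a by simp
  also have "\<dots> = (if even k then c!(k div 2) else b (play b c k))" by (simp add: nth_append)
  finally show ?thesis .
qed

lemma play_dep: "take r c = take r c' \<Longrightarrow> k \<le> 2*r \<Longrightarrow> play b c k = play b c' k"
proof (induction k)
  case 0 then show ?case by simp
next
  case (Suc k)
  then have ih: "play b c k = play b c' k" by simp
  have "even k \<Longrightarrow> c ! (k div 2) = c' ! (k div 2)"
  proof -
    assume "even k"
    have "k div 2 < r" using Suc.prems(2) by simp
    then show ?thesis using Suc.prems(1) by (metis nth_take)
  qed
  then show ?case using ih by simp
qed

lemma enc_inj:
  assumes "length c = M" "length c' = M"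
    "map (fate (play b c (2*M))) [0..<M] = map (fate (play b c' (2*M))) [0..<M]"
    "cur (play b c (2*M)) = cur (play b c' (2*M))"
  shows "c = c'"
proof -
  define s where "s = play b c (2*M)"
  define s' where "s' = play b c' (2*M)"
  have fm: "map (fate s) [0..<M] = map (fate s') [0..<M]" using assms(3) unfolding s_def s'_def .
  have fin: "cur s = cur s'" using assms(4) unfolding s_def s'_def .
  have "r \<le> M \<Longrightarrow> take r c = take r c'" for r
  proof (induction r)
    case 0 then show ?case by simp
  next
    case (Suc r)
    then have rM: "r < M" and ih: "take r c = take r c'" by auto
    have pe: "play b c (2*r) = play b c' (2*r)" using play_dep[OF ih] by simp
    have tk: "take (2*r) s = take (2*r) s'"
      unfolding s_def s'_def using play_take[of "2*r" "2*M" b c] play_take[of "2*r" "2*M" b c'] pe rM by simp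
    have cs: "c!r = s!(2*r)" unfolding s_def using play_nth[of "2*r" "2*M" b c] rM by simp
    have cs': "c'!r = s'!(2*r)" unfolding s'_def using play_nth[of "2*r" "2*M" b c'] rM by simp
    have ls: "2*r < length s" "2*r < length s'" unfolding s_def s'_def using rM by auto
    have fr: "fate s r = fate s' r" using fm rM
      by (metis map_eq_conv atLeastLessThan_iff set_upt zero_le)
    have le: "len s (2*r) = len s' (2*r)" using len_dep[OF tk] by simp
    have ce: "cur (take (2*r) s) = cur (take (2*r) s')" using tk by simp
    have "s!(2*r) = s'!(2*r)"
    proof (cases "fate s r")
      case Surv
      then show ?thesis using decode_Surv[OF ls(1)] decode_Surv[OF ls(2)] fr fin le by simp
    next
      case (Kill h)
      then show ?thesis using decode_Kill[OF ls(1)] decode_Kill[OF ls(2)] fr ce le by simp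
    next
      case Cont
      then have c: "killed s (2*r) \<and> haspred s r \<and> killed s (2*pred s r) \<and> ksize s (2*pred s r) = ksize s (2*r)"
        by (rule fate_Cont)
      have pe: "pred s r = pred s' r" using pred_dep(2)[OF tk] .
      have pl: "pred s r < r" using pred_props(1) c by blast
      have tk2: "take (2*pred s r) s = take (2*pred s r) s'"
      proof -
        have "take (2*pred s r) s = take (2*pred s r) (take (2*r) s)" using pl by simp
        also have "\<dots> = take (2*pred s r) (take (2*r) s')" using tk by simp
        also have "\<dots> = take (2*pred s r) s'" using pl by simp
        finally show ?thesis .
      qed
      have "ksize s (2*pred s r) = ksize s' (2*pred s r)"
        using ks_eq[OF fm tk2] pl rM c by simp
      then show ?thesis using decode_Cont[OF ls(1) Cont] decode_Cont[OF ls(2)] Cont fr ce le pe by simp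
    qed
    then have "c!r = c'!r" using cs cs' by simp
    then show ?case using ih rM assms(1,2) by (simp add: take_Suc_conv_app_nth)
  qed
  then show ?thesis using assms(1,2) by (metis order.refl take_all)
qed


fun ksz :: "fate \<Rightarrow> nat" where
  "ksz (Kill h) = h" | "ksz Surv = 0" | "ksz Cont = 0"

definition ksum :: "fate list \<Rightarrow> nat" where "ksum f = sum_list (map ksz f)"
definition scount :: "fate list \<Rightarrow> nat" where "scount f = length (filter (\<lambda>e. e = Surv) f)"
definition FA :: "nat \<Rightarrow> fate set" where "FA n = {Surv, Cont} \<union> Kill ` {1..n}"

lemma kt_distinct:
  assumes "j < j'" "2*j' < length s" "fate s j = Kill h" "fate s j' = Kill h'"
  shows "kt s (2*j) \<noteq> kt s (2*j')"
proof
  assume eq: "kt s (2*j) = kt s (2*j')"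
  define \<tau> where "\<tau> = kt s (2*j')"
  have kj: "killed s (2*j)" using fate_Kill[OF assms(3)] by blast
  have kj': "killed s (2*j')" and nc: "\<not> (haspred s j' \<and> killed s (2*pred s j') \<and> ksize s (2*pred s j') = ksize s (2*j'))"
    using fate_Kill[OF assms(4)] by blast+
  note p1 = kt_props[OF kj] and p2 = kt_props[OF kj']
  have al: "alive s (2*j) (2*j')" unfolding alive_def
  proof (intro allI impI)
    fix t' assume "2*j < t' \<and> t' \<le> 2*j'"
    moreover have "2*j' < kt s (2*j)" using eq p2(1) by simp
    ultimately show "len s (2*j) < len s t'" using p1(4) by auto
  qed
  have hp: "haspred s j'" unfolding haspred_def using al assms(1) by auto
  define p where "p = pred s j'"
  have pp: "p < j'" "alive s (2*p) (2*j')" "j \<le> p"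
    using pred_props[OF hp] al assms(1) unfolding p_def by auto
  have ljp: "len s (2*j) \<le> len s (2*p)"
  proof (cases "p = j")
    case True then show ?thesis by simp
  next
    case False then have "2*j < 2*p" "2*p \<le> 2*j'" using pp by auto
    then show ?thesis using al unfolding alive_def by fastforce
  qed
  have tp: "2*p < \<tau>" "\<tau> \<le> length s" "len s \<tau> \<le> len s (2*p)"
  proof -
    show "2*p < \<tau>" using p2(1) pp(1) unfolding \<tau>_def by simp
    show "\<tau> \<le> length s" using p2(2) unfolding \<tau>_def .
    show "len s \<tau> \<le> len s (2*p)" using p1(3) eq ljp unfolding \<tau>_def by simp
  qed
  have kp: "killed s (2*p)" unfolding killed_def using tp by blast
  have "kt s (2*p) = \<tau>"
  proof (rule ccontr)
    assume ne: "kt s (2*p) \<noteq> \<tau>"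
    have le: "kt s (2*p) \<le> \<tau>" unfolding kt_def
      using tp by (intro Least_le) auto
    note p3 = kt_props[OF kp]
    have gt: "2*j' < kt s (2*p)"
    proof (rule ccontr)
      assume "\<not> 2*j' < kt s (2*p)"
      then show False using pp(2) p3(1) p3(3) unfolding alive_def by fastforce
    qed
    have "len s (2*p) < len s (2*j')" using pp unfolding alive_def by auto
    then have "len s (kt s (2*p)) < len s (2*j')" using p3(3) by simp
    moreover have "kt s (2*p) < kt s (2*j')" using le ne unfolding \<tau>_def by simp
    ultimately show False using p2(4)[OF gt] by simp
  qed
  then have "ksize s (2*p) = ksize s (2*j')" unfolding ksize_def \<tau>_def by simp
  then show False using nc hp kp unfolding p_def by simp
qed

lemma telescope: "T \<le> length s \<Longrightarrow> (\<Sum>t\<in>{1..T}. dd s t) + len s T = T"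
proof (induction T)
  case 0 then show ?case by simp
next
  case (Suc T)
  have "len s (Suc T) \<le> len s T + 1" using len_Suc_le[of T s] Suc.prems by simp
  then have "dd s (Suc T) + len s (Suc T) = len s T + 1" unfolding dd_def by simp
  then show ?case using Suc by (simp add: sum.cl_ivl_Suc)
qed

lemma constraints:
  assumes ls: "length s = 2*M" and bnd: "\<forall>t\<le>2*M. len s t < n"
  shows "set (map (fate s) [0..<M]) \<subseteq> FA n"
        "ksum (map (fate s) [0..<M]) \<le> 2*M"
        "scount (map (fate s) [0..<M]) \<le> n - 1"
proof -
  have ks_bnd: "1 \<le> ksize s (2*r) \<and> ksize s (2*r) \<le> n" if "r < M" "killed s (2*r)" for r
  proof -
    have r2: "2*r < length s" using that ls by simp
    have "ksize s (2*r) \<le> len s (kt s (2*r) - 1) + 1" unfolding ksize_def dd_def by simp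
    moreover have "len s (kt s (2*r) - 1) < n" using bnd kt_props(2)[OF that(2)] ls by simp
    ultimately show ?thesis using kill_val(1)[OF r2 that(2)] by simp
  qed
  show "set (map (fate s) [0..<M]) \<subseteq> FA n"
  proof
    fix e assume "e \<in> set (map (fate s) [0..<M])"
    then obtain r where r: "r < M" "e = fate s r" by auto
    show "e \<in> FA n"
    proof (cases e)
      case (Kill h)
      then have "killed s (2*r) \<and> h = ksize s (2*r)" using fate_Kill r by metis
      then show ?thesis using ks_bnd[OF r(1)] Kill unfolding FA_def by auto
    qed (auto simp: FA_def)
  qed
  define R where "R = {r. r < M \<and> fate s r = Surv}"
  have surv: "len s (2*r) < len s t'" if "r \<in> R" "2*r < t'" "t' \<le> 2*M" for r t'
  proof -
    have "\<not> killed s (2*r)" using that(1) fate_Surv unfolding R_def by blast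
    then show ?thesis using that ls unfolding killed_def by (metis not_le)
  qed
  have cR: "scount (map (fate s) [0..<M]) = card R"
  proof -
    have "\<And>i. i < M \<Longrightarrow> map (fate s) [0..<M] ! i = fate s i" by simp
    then have "{i. i < length (map (fate s) [0..<M]) \<and> map (fate s) [0..<M] ! i = Surv} = R"
      unfolding R_def by auto
    then show ?thesis unfolding scount_def length_filter_conv_card by simp
  qed
  have inj: "inj_on (\<lambda>r. len s (2*r)) R"
  proof (rule inj_onI)
    fix x y assume xy: "x \<in> R" "y \<in> R" "len s (2*x) = len s (2*y)"
    have xM: "x < M" "y < M" using xy unfolding R_def by auto
    show "x = y"
    proof (rule ccontr)
      assume "x \<noteq> y"
      then consider "x < y" | "y < x" by linarith
      then show False
      proof cases
        case 1 then show False using surv[OF xy(1), of "2*y"] xy(3) xM by simp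
      next
        case 2 then show False using surv[OF xy(2), of "2*x"] xy(3) xM by simp
      qed
    qed
  qed
  have img: "(\<lambda>r. len s (2*r)) ` R \<subseteq> {..<len s (2*M)}"
  proof
    fix x assume "x \<in> (\<lambda>r. len s (2*r)) ` R"
    then obtain r where r: "r \<in> R" "x = len s (2*r)" by auto
    have "r < M" using r unfolding R_def by simp
    then show "x \<in> {..<len s (2*M)}" using surv[OF r(1), of "2*M"] r by simp
  qed
  have "card R \<le> card {..<len s (2*M)}" using card_inj_on_le[OF inj img] by simp
  also have "\<dots> \<le> n - 1" using bnd[rule_format, of "2*M"] by simp
  finally show "scount (map (fate s) [0..<M]) \<le> n - 1" using cR by simp
  define RK where "RK = {r. r < M \<and> (\<exists>h. fate s r = Kill h)}"
  have "ksum (map (fate s) [0..<M]) = (\<Sum>r\<in>{0..<M}. ksz (fate s r))"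
    unfolding ksum_def by (simp add: interv_sum_list_conv_sum_set_nat comp_def)
  also have "\<dots> = (\<Sum>r\<in>RK. ksz (fate s r))"
  proof (rule sum.mono_neutral_right)
    show "\<forall>i\<in>{0..<M} - RK. ksz (fate s i) = 0"
    proof
      fix i assume "i \<in> {0..<M} - RK"
      then show "ksz (fate s i) = 0" unfolding RK_def by (cases "fate s i") auto
    qed
  qed (auto simp: RK_def)
  also have "\<dots> = (\<Sum>r\<in>RK. dd s (kt s (2*r)))"
  proof (rule sum.cong)
    fix r assume "r \<in> RK"
    then obtain h where h: "fate s r = Kill h" unfolding RK_def by auto
    then show "ksz (fate s r) = dd s (kt s (2*r))" using fate_Kill[OF h] unfolding ksize_def by simp
  qed simp
  also have "\<dots> = (\<Sum>t\<in>(\<lambda>r. kt s (2*r)) ` RK. dd s t)"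
  proof -
    have "inj_on (\<lambda>r. kt s (2*r)) RK"
    proof (rule inj_onI)
      fix x y assume xy: "x \<in> RK" "y \<in> RK" "kt s (2*x) = kt s (2*y)"
      obtain hx hy where hx: "fate s x = Kill hx" and hy: "fate s y = Kill hy" and xyM: "x < M" "y < M"
        using xy(1,2) unfolding RK_def by auto
      show "x = y"
      proof (rule ccontr)
        assume "x \<noteq> y"
        then consider "x < y" | "y < x" by linarith
        then show False
        proof cases
          case 1
          have "2*y < length s" using xyM ls by simp
          then show False using kt_distinct[OF 1 _ hx hy] xy(3) by blast
        next
          case 2
          have "2*x < length s" using xyM ls by simp
          then show False using kt_distinct[OF 2 _ hy hx] xy(3) by simp
        qed
      qed
    qed
    then show ?thesis by (simp add: sum.reindex)
  qed
  also have "\<dots> \<le> (\<Sum>t\<in>{1..2*M}. dd s t)"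
  proof (rule sum_mono2)
    show "(\<lambda>r. kt s (2*r)) ` RK \<subseteq> {1..2*M}"
    proof
      fix x assume "x \<in> (\<lambda>r. kt s (2*r)) ` RK"
      then obtain r h where r: "x = kt s (2*r)" "fate s r = Kill h" unfolding RK_def by auto
      have "killed s (2*r)" using fate_Kill[OF r(2)] by blast
      then show "x \<in> {1..2*M}" using kt_props(1,2)[of s "2*r"] r ls by auto
    qed
  qed auto
  also have "\<dots> \<le> 2*M" using telescope[of "2*M" s] ls by simp
  finally show "ksum (map (fate s) [0..<M]) \<le> 2*M" .
qed



definition FS :: "nat \<Rightarrow> nat \<Rightarrow> fate list set" where
  "FS n M = {f. set f \<subseteq> FA n \<and> length f = M \<and> ksum f \<le> 2*M \<and> scount f \<le> n - 1}"

fun w :: "fate \<Rightarrow> real" where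
  "w Surv = 1/9" | "w Cont = 1" | "w (Kill h) = (2/3)^h"

lemma prodw: "prod_list (map w f) = (2/3)^(ksum f) * (1/9)^(scount f)"
proof (induction f)
  case Nil then show ?case by (simp add: ksum_def scount_def)
next
  case (Cons e f)
  then show ?case by (cases e) (auto simp: ksum_def scount_def power_add)
qed

lemma finite_FA: "finite (FA n)" unfolding FA_def by simp

lemma lists_Suc: "{f. set f \<subseteq> A \<and> length f = Suc M} = (\<lambda>(e,f). e#f) ` (A \<times> {f. set f \<subseteq> A \<and> length f = M})"
proof
  show "{f. set f \<subseteq> A \<and> length f = Suc M} \<subseteq> (\<lambda>(e,f). e#f) ` (A \<times> {f. set f \<subseteq> A \<and> length f = M})"
  proof
    fix f assume "f \<in> {f. set f \<subseteq> A \<and> length f = Suc M}"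
    then obtain e g where "f = e#g" "e \<in> A" "set g \<subseteq> A" "length g = M"
      by (cases f) auto
    then show "f \<in> (\<lambda>(e,f). e#f) ` (A \<times> {f. set f \<subseteq> A \<and> length f = M})" by auto
  qed
qed auto

lemma sum_lists:
  assumes "finite A"
  shows "(\<Sum>f\<in>{f. set f \<subseteq> A \<and> length f = M}. prod_list (map w f)) = (\<Sum>e\<in>A. w e)^M"
proof (induction M)
  case 0
  have "{f. set f \<subseteq> A \<and> length f = 0} = {[]}" by auto
  then show ?case by simp
next
  case (Suc M)
  let ?L = "{f. set f \<subseteq> A \<and> length f = M}"
  have inj: "inj_on (\<lambda>(e,f). e#f) (A \<times> ?L)" by (auto simp: inj_on_def)
  have "(\<Sum>f\<in>{f. set f \<subseteq> A \<and> length f = Suc M}. prod_list (map w f))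
      = (\<Sum>p\<in>A \<times> ?L. prod_list (map w ((\<lambda>(e,f). e#f) p)))"
    unfolding lists_Suc by (rule sum.reindex[OF inj, unfolded comp_def])
  also have "\<dots> = (\<Sum>p\<in>A \<times> ?L. w (fst p) * prod_list (map w (snd p)))"
    by (rule sum.cong) auto
  also have "\<dots> = (\<Sum>e\<in>A. w e) * (\<Sum>f\<in>?L. prod_list (map w f))"
    by (simp add: sum_product sum.cartesian_product case_prod_beta)
  also have "\<dots> = (\<Sum>e\<in>A. w e)^(Suc M)" using Suc by simp
  finally show ?case .
qed

lemma geo: "(\<Sum>h\<in>{1..n}. (2/3::real)^h) = 2 - 2*(2/3)^n"
proof (induction n)
  case 0 then show ?case by simp
next
  case (Suc n) then show ?case by (simp add: sum.cl_ivl_Suc)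
qed

lemma sum_FA: "(\<Sum>e\<in>FA n. w e) \<le> 28/9"
proof -
  have d: "FA n = insert Surv (insert Cont (Kill ` {1..n}))" unfolding FA_def by auto
  have "(\<Sum>e\<in>Kill ` {1..n}. w e) = (\<Sum>h\<in>{1..n}. w (Kill h))"
    by (rule sum.reindex[unfolded comp_def]) (simp add: inj_on_def)
  also have "\<dots> = 2 - 2*(2/3)^n" using geo by simp
  finally have k: "(\<Sum>e\<in>Kill ` {1..n}. w e) \<le> 2" by simp
  have "(\<Sum>e\<in>FA n. w e) = 1/9 + (1 + (\<Sum>e\<in>Kill ` {1..n}. w e))"
    unfolding d by (subst sum.insert; auto)+
  then show ?thesis using k by simp
qed

lemma pw_ge1: "k \<le> m \<Longrightarrow> (x::real) \<ge> 1 \<Longrightarrow> 1 \<le> x^m * (1/x)^k"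
proof -
  assume a: "k \<le> m" "x \<ge> 1"
  have "x^m * (1/x)^k = x^(m-k) * (x^k * (1/x)^k)" using a by (simp add: power_add[symmetric])
  also have "x^k * (1/x)^k = 1" using a by (simp add: power_mult_distrib[symmetric])
  finally show ?thesis using a by simp
qed

lemma card_FS: "real (card (FS n M)) \<le> 7^M * 9^(n-1)"
proof -
  let ?L = "{f. set f \<subseteq> FA n \<and> length f = M}"
  let ?g = "\<lambda>f. (9/4)^M * 9^(n-1) * prod_list (map w f)"
  have fL: "finite ?L" using finite_lists_length_eq[OF finite_FA] by simp
  have sub: "FS n M \<subseteq> ?L" unfolding FS_def by auto
  have "real (card (FS n M)) = (\<Sum>f\<in>FS n M. (1::real))" by simp
  also have "\<dots> \<le> (\<Sum>f\<in>FS n M. ?g f)"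
  proof (rule sum_mono)
    fix f assume "f \<in> FS n M"
    then have f: "ksum f \<le> 2*M" "scount f \<le> n - 1" unfolding FS_def by auto
    have a: "1 \<le> (3/2::real)^(2*M) * (1/(3/2))^(ksum f)" by (rule pw_ge1) (use f in auto)
    have b: "1 \<le> (9::real)^(n-1) * (1/9)^(scount f)" by (rule pw_ge1) (use f in auto)
    have "(3/2::real)^(2*M) = ((3/2)^2)^M" by (simp add: power_mult)
    also have "\<dots> = (9/4)^M" by (simp add: power2_eq_square)
    finally have "(3/2::real)^(2*M) = (9/4)^M" .
    then have "?g f = ((3/2::real)^(2*M) * (1/(3/2))^(ksum f)) * ((9::real)^(n-1) * (1/9)^(scount f))"
      by (simp add: prodw)
    also have "\<dots> \<ge> 1" using a b by (metis mult_mono' mult.right_neutral order.trans zero_le_one)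
    finally show "1 \<le> ?g f" .
  qed
  also have "\<dots> \<le> (\<Sum>f\<in>?L. ?g f)"
    by (rule sum_mono2[OF fL sub]) (simp add: prodw)
  also have "\<dots> = (9/4)^M * 9^(n-1) * (\<Sum>f\<in>?L. prod_list (map w f))"
    by (simp add: sum_distrib_left)
  also have "\<dots> = (9/4)^M * 9^(n-1) * (\<Sum>e\<in>FA n. w e)^M"
    using sum_lists[OF finite_FA] by simp
  also have "\<dots> \<le> (9/4)^M * 9^(n-1) * (28/9)^M"
  proof -
    have "0 \<le> (\<Sum>e\<in>FA n. w e)" by (rule sum_nonneg) (case_tac x; simp)
    then have "(\<Sum>e\<in>FA n. w e)^M \<le> (28/9)^M" using sum_FA power_mono by blast
    then show ?thesis by simp
  qed
  also have "\<dots> = 7^M * 9^(n-1)" by (simp add: power_mult_distrib[symmetric])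
  finally show ?thesis .
qed



lemma card_fin:
  assumes "finite S" "card S \<ge> 1"
  shows "card {xs. set xs \<subseteq> S \<and> length xs < n} \<le> n * card S ^ n"
proof -
  have e: "{xs. set xs \<subseteq> S \<and> length xs < n} = (\<Union>L\<in>{..<n}. {xs. set xs \<subseteq> S \<and> length xs = L})" by auto
  have "card {xs. set xs \<subseteq> S \<and> length xs < n} \<le> (\<Sum>L\<in>{..<n}. card {xs. set xs \<subseteq> S \<and> length xs = L})"
    unfolding e by (rule card_UN_le) simp
  also have "\<dots> = (\<Sum>L\<in>{..<n}. card S ^ L)" using card_lists_length_eq[OF assms(1)] by simp
  also have "\<dots> \<le> (\<Sum>L\<in>{..<n}. card S ^ n)"
    by (rule sum_mono) (use assms(2) in \<open>auto intro: power_increasing\<close>)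
  also have "\<dots> = n * card S ^ n" by simp
  finally show ?thesis .
qed

lemma set_play: "set c \<subseteq> S \<Longrightarrow> (\<forall>h. b h \<in> S) \<Longrightarrow> length c = M \<Longrightarrow> k \<le> 2*M \<Longrightarrow> set (play b c k) \<subseteq> S"
proof (induction k)
  case 0 then show ?case by simp
next
  case (Suc k)
  have "even k \<Longrightarrow> c ! (k div 2) \<in> S"
  proof -
    assume "even k"
    have "k div 2 < length c" using Suc.prems by simp
    then show ?thesis using Suc.prems(1) nth_mem by blast
  qed
  then show ?case using Suc by auto
qed

lemma exists_good:
  assumes fS: "finite S" and cS: "card S \<ge> 1" and bS: "\<forall>h. b h \<in> S"
    and big: "real (card S)^M > 7^M * 9^(n-1) * (real n * real (card S)^n)"
  shows "\<exists>c. set c \<subseteq> S \<and> length c = M \<and> (\<exists>t \<le> 2*M. n \<le> len (play b c (2*M)) t)"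
proof (rule ccontr)
  assume neg: "\<not> ?thesis"
  let ?CS = "{c. set c \<subseteq> S \<and> length c = M}"
  let ?FIN = "{xs. set xs \<subseteq> S \<and> length xs < n}"
  define enc where "enc c = (map (fate (play b c (2*M))) [0..<M], cur (play b c (2*M)))" for c
  have inj: "inj_on enc ?CS"
  proof (rule inj_onI)
    fix c c' assume "c \<in> ?CS" "c' \<in> ?CS" "enc c = enc c'"
    then show "c = c'" unfolding enc_def using enc_inj[of c M c' b] by auto
  qed
  have img: "enc ` ?CS \<subseteq> FS n M \<times> ?FIN"
  proof
    fix x assume "x \<in> enc ` ?CS"
    then obtain c where c: "c \<in> ?CS" "x = enc c" by auto
    define s where "s = play b c (2*M)"
    have ls: "length s = 2*M" unfolding s_def by simp
    have bnd: "\<forall>t\<le>2*M. len s t < n"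
    proof (intro allI impI)
      fix t assume t: "t \<le> 2*M"
      show "len s t < n"
      proof (rule ccontr)
        assume "\<not> len s t < n"
        then have "n \<le> len (play b c (2*M)) t" unfolding s_def by simp
        then show False using neg c(1) t by blast
      qed
    qed
    note cs = constraints[OF ls bnd]
    have f1: "map (fate s) [0..<M] \<in> FS n M" unfolding FS_def using cs by simp
    have "set (cur s) \<subseteq> S" using set_cur[of s] set_play[of c S b M "2*M"] c(1) bS unfolding s_def by auto
    moreover have "length (cur s) < n" using bnd[rule_format, of "2*M"] ls unfolding len_def by simp
    ultimately show "x \<in> FS n M \<times> ?FIN" using f1 c(2) unfolding enc_def s_def by simp
  qed
  have fFS: "finite (FS n M)"
  proof (rule finite_subset)
    show "FS n M \<subseteq> {f. set f \<subseteq> FA n \<and> length f = M}" unfolding FS_def by auto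
    show "finite {f. set f \<subseteq> FA n \<and> length f = M}" using finite_lists_length_eq[OF finite_FA] by simp
  qed
  have fFIN: "finite ?FIN"
  proof (rule finite_subset)
    show "?FIN \<subseteq> {xs. set xs \<subseteq> S \<and> length xs \<le> n}" by auto
    show "finite {xs. set xs \<subseteq> S \<and> length xs \<le> n}" using finite_lists_length_le[OF fS] by simp
  qed
  have "card ?CS \<le> card (FS n M \<times> ?FIN)"
    by (rule card_inj_on_le[OF inj img]) (use fFS fFIN in simp)
  also have "\<dots> = card (FS n M) * card ?FIN" by (simp add: card_cartesian_product)
  finally have le: "card S ^ M \<le> card (FS n M) * card ?FIN" using card_lists_length_eq[OF fS] by simp
  have "real (card S) ^ M \<le> real (card (FS n M)) * real (card ?FIN)"
    using le by (metis of_nat_le_iff of_nat_mult of_nat_power)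
  also have "\<dots> \<le> (7^M * 9^(n-1)) * (real n * real (card S)^n)"
  proof (rule mult_mono)
    show "real (card (FS n M)) \<le> 7^M * 9^(n-1)" by (rule card_FS)
    have "card ?FIN \<le> n * card S ^ n" by (rule card_fin[OF fS cS])
    then show "real (card ?FIN) \<le> real n * real (card S)^n"
      by (metis of_nat_le_iff of_nat_mult of_nat_power)
  qed auto
  finally show False using big by simp
qed

fun Wg :: "'a set \<Rightarrow> nat \<Rightarrow> nat \<Rightarrow> 'a list \<Rightarrow> bool" where
  "Wg S n 0 h = (\<exists>i \<le> length h. n \<le> length (cur (take i h)))"
| "Wg S n (Suc d) h = (if even (length h) then (\<exists>a\<in>S. Wg S n d (h@[a])) else (\<forall>b\<in>S. Wg S n d (h@[b])))"

lemma Wg_start: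
  assumes fS: "finite S" and cS: "card S \<ge> 1"
    and big: "real (card S)^M > 7^M * 9^(n-1) * (real n * real (card S)^n)"
  shows "Wg S n (2*M) []"
proof (rule ccontr)
  assume nW: "\<not> Wg S n (2*M) []"
  have ne: "S \<noteq> {}" using cS by auto
  define \<beta> where "\<beta> h = (if \<exists>b\<in>S. \<not> Wg S n (2*M - length h - 1) (h@[b])
      then SOME b. b \<in> S \<and> \<not> Wg S n (2*M - length h - 1) (h@[b]) else SOME b. b \<in> S)" for h
  have bS: "\<forall>h. \<beta> h \<in> S"
  proof
    fix h
    show "\<beta> h \<in> S"
    proof (cases "\<exists>b\<in>S. \<not> Wg S n (2*M - length h - 1) (h@[b])")
      case True
      then have "\<exists>b. b \<in> S \<and> \<not> Wg S n (2*M - length h - 1) (h@[b])" by blast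
      have "\<beta> h = (SOME b. b \<in> S \<and> \<not> Wg S n (2*M - length h - 1) (h@[b]))"
        by (subst \<beta>_def) (use True in simp)
      with someI_ex[OF \<open>\<exists>b. b \<in> S \<and> \<not> Wg S n (2*M - length h - 1) (h@[b])\<close>] show ?thesis by simp
    next
      case False
      have "\<exists>b. b \<in> S" using ne by blast
      have "\<beta> h = (SOME b. b \<in> S)"
        by (subst \<beta>_def) (use False in simp)
      with someI_ex[OF \<open>\<exists>b. b \<in> S\<close>] show ?thesis by simp
    qed
  qed
  obtain c where c: "set c \<subseteq> S" "length c = M" "\<exists>t \<le> 2*M. n \<le> len (play \<beta> c (2*M)) t"
    using exists_good[OF fS cS bS big] by blast
  have "k \<le> 2*M \<Longrightarrow> \<not> Wg S n (2*M - k) (play \<beta> c k)" for k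
  proof (induction k)
    case 0 then show ?case using nW by simp
  next
    case (Suc k)
    define d where "d = 2*M - Suc k"
    have dk: "2*M - k = Suc d" using Suc.prems unfolding d_def by simp
    have nw: "\<not> Wg S n (Suc d) (play \<beta> c k)" using Suc dk by simp
    show ?case
    proof (cases "even k")
      case True
      have "k div 2 < length c" using Suc.prems c(2) True by simp
      then have cin: "c ! (k div 2) \<in> S" using c(1) nth_mem by blast
      have "\<not> Wg S n d (play \<beta> c k @ [c ! (k div 2)])" using nw True cin by auto
      then show ?thesis using True unfolding d_def by simp
    next
      case False
      have ex: "\<exists>b\<in>S. \<not> Wg S n d (play \<beta> c k @ [b])" using nw False by auto
      have dd: "2*M - length (play \<beta> c k) - 1 = d" unfolding d_def by simp
      have "\<beta> (play \<beta> c k) \<in> S \<and> \<not> Wg S n d (play \<beta> c k @ [\<beta> (play \<beta> c k)])"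
      proof -
        have e2: "\<exists>b. b \<in> S \<and> \<not> Wg S n d (play \<beta> c k @ [b])" using ex by blast
        have "\<beta> (play \<beta> c k) = (SOME b. b \<in> S \<and> \<not> Wg S n d (play \<beta> c k @ [b]))"
          by (subst \<beta>_def) (use ex dd in simp)
        with someI_ex[OF e2] show ?thesis by simp
      qed
      then show ?thesis using False unfolding d_def by simp
    qed
  qed
  then have "\<not> Wg S n 0 (play \<beta> c (2*M))" by (metis diff_self_eq_0 order.refl)
  then show False using c(3) unfolding len_def by auto
qed



lemma history_len[simp]: "length (history ann ben k) = k"
  by (induction k) auto

lemma history_take: "k \<le> K \<Longrightarrow> take k (history ann ben K) = history ann ben k"
proof (induction K)
  case 0 then show ?case by simp
next
  case (Suc K)
  show ?case
  proof (cases "k = Suc K")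
    case True then show ?thesis by simp
  next
    case False then have "k \<le> K" using Suc by simp
    then show ?thesis using Suc by simp
  qed
qed

lemma ivt:
  fixes f :: "nat \<Rightarrow> nat"
  assumes "f 0 = 0" "\<And>k. f (Suc k) \<le> f k + 1"
  shows "m \<le> f i \<Longrightarrow> \<exists>j\<le>i. f j = m"
proof (induction i)
  case 0 then show ?case using assms(1) by simp
next
  case (Suc i)
  show ?case
  proof (cases "m \<le> f i")
    case True then show ?thesis using Suc.IH by (meson le_Suc_eq)
  next
    case False
    then have "m = f (Suc i)" using Suc.prems assms(2)[of i] by simp
    then show ?thesis by blast
  qed
qed

theorem mainTheorem2:
  fixes S :: "'a set" and n :: nat
  assumes "finite S" and "card S \<ge> 8" and "n \<ge> 1"
  shows "\<exists>ann :: 'a list \<Rightarrow> 'a. (\<forall>h. ann h \<in> S) \<and>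
           (\<forall>ben :: nat \<Rightarrow> 'a. (\<forall>i. ben i \<in> S) \<longrightarrow>
              (\<exists>k. length (current_seq ann ben k) = n))"
proof -
  have fS: "finite S" and cS1: "card S \<ge> 1" using assms by auto
  have ne: "S \<noteq> {}" using cS1 by auto
  have x1: "1 < real (card S) / 7" using assms(2) by simp
  obtain M where M: "9^(n-1) * (real n * real (card S)^n) < (real (card S) / 7)^M"
    using real_arch_pow[OF x1] by blast
  have big: "real (card S)^M > 7^M * 9^(n-1) * (real n * real (card S)^n)"
  proof -
    have "real (card S)^M = (real (card S) / 7)^M * 7^M" by (simp add: power_divide)
    moreover have "(7::real)^M > 0" by simp
    ultimately show ?thesis using M by (simp add: mult.commute mult.left_commute)
  qed
  have W: "Wg S n (2*M) []" by (rule Wg_start[OF fS cS1 big])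
  define ann where "ann h = (if \<exists>a\<in>S. Wg S n (2*M - length h - 1) (h@[a])
      then SOME a. a \<in> S \<and> Wg S n (2*M - length h - 1) (h@[a]) else SOME a. a \<in> S)" for h
  have annS: "\<forall>h. ann h \<in> S"
  proof
    fix h
    show "ann h \<in> S"
    proof (cases "\<exists>a\<in>S. Wg S n (2*M - length h - 1) (h@[a])")
      case True
      then have e: "\<exists>a. a \<in> S \<and> Wg S n (2*M - length h - 1) (h@[a])" by blast
      have "ann h = (SOME a. a \<in> S \<and> Wg S n (2*M - length h - 1) (h@[a]))"
        by (subst ann_def) (use True in simp)
      with someI_ex[OF e] show ?thesis by simp
    next
      case False
      have e: "\<exists>a. a \<in> S" using ne by blast
      have "ann h = (SOME a. a \<in> S)" by (subst ann_def) (use False in simp)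
      with someI_ex[OF e] show ?thesis by simp
    qed
  qed
  have win: "\<exists>k. length (current_seq ann ben k) = n" if benS: "\<forall>i. ben i \<in> S" for ben
  proof -
    let ?H = "history ann ben"
    have "k \<le> 2*M \<Longrightarrow> Wg S n (2*M - k) (?H k)" for k
    proof (induction k)
      case 0 then show ?case using W by simp
    next
      case (Suc k)
      define d where "d = 2*M - Suc k"
      have dk: "2*M - k = Suc d" using Suc.prems unfolding d_def by simp
      have wk: "Wg S n (Suc d) (?H k)" using Suc dk by simp
      show ?case
      proof (cases "even k")
        case True
        have ex: "\<exists>a\<in>S. Wg S n d (?H k @ [a])" using wk True by simp
        have dd: "2*M - length (?H k) - 1 = d" unfolding d_def by simp
        have e2: "\<exists>a. a \<in> S \<and> Wg S n d (?H k @ [a])" using ex by blast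
        have "ann (?H k) = (SOME a. a \<in> S \<and> Wg S n d (?H k @ [a]))"
          by (subst ann_def) (use ex dd in simp)
        with someI_ex[OF e2] have "Wg S n d (?H k @ [ann (?H k)])" by simp
        then show ?thesis using True unfolding d_def by simp
      next
        case False
        have "Wg S n d (?H k @ [ben (k div 2)])" using wk False benS by simp
        then show ?thesis using False unfolding d_def by simp
      qed
    qed
    then have "Wg S n 0 (?H (2*M))" by (metis diff_self_eq_0 order.refl)
    then obtain i where i: "i \<le> 2*M" "n \<le> length (cur (take i (?H (2*M))))" by auto
    then have "n \<le> length (current_seq ann ben i)"
      using history_take[OF i(1), of ann ben] unfolding current_seq_def cur_def by simp
    moreover have "length (current_seq ann ben 0) = 0" unfolding current_seq_def by simp
    moreover have "\<And>k. length (current_seq ann ben (Suc k)) \<le> length (current_seq ann ben k) + 1"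
      unfolding current_seq_def by (simp add: gm_len)
    ultimately show ?thesis using ivt[of "\<lambda>k. length (current_seq ann ben k)"] by blast
  qed
  show ?thesis using annS win by blast
qed


end
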